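(* Let $\mathcal{C}=\{C_1,\ldots,C_r\}$ be a partition of $C$ and let $F$ be a joint distribution of the component lifetimes without ties. Suppose there exists a function $\gamma\colon\prod_{j=1}^r\{0,\ldots,n_j\}\to\mathbb{R}$ with the following property. For every semicoherent structure $\phi$ admitting a modular decomposition $\phi(\mathbf{x})=\psi(\chi_1(\mathbf{x}^{C_1}),\ldots,\chi_r(\mathbf{x}^{C_r}))$, with $\chi_j\colon\{0,1\}^{C_j}\to\{0,1\}$ and $\psi\colon\{0,1\}^r\to\{0,1\}$ semicoherent, and for every $0\le k\le n$, $$\overline{P}_{n-k}=\sum_{\mathbf{a}\in\mathcal{T}_k}\gamma(\mathbf{a})\,\widehat\psi\big(\overline{P}_{1,n_1-a_1},\ldots,\overline{P}_{r,n_r-a_r}\big).$$ Then the relative quality function $q$ associated with $F$ is $\mathcal{C}$-decomposable.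
   Context: Consider components $C=[n]$ with random lifetimes $T_1,\ldots,T_n$ with joint distribution $F$ having no ties. Subsets are identified with Boolean vectors. A structure $\phi\colon\{0,1\}^m\to\{0,1\}$ is semicoherent if it is nondecreasing in each variable, $\phi(\mathbf{0})=0$ and $\phi(\mathbf{1})=1$. The relative quality function is $q(A)=\Pr(\max_{i\notin A}T_i<\min_{i\in A}T_i)$, with $q(\varnothing)=q([n])=1$. For a partition $\mathcal{C}=\{C_1,\ldots,C_r\}$ of $C$ into nonempty blocks, write $n_j=|C_j|$, $A_j=A\cap C_j$, $\mathbf{x}^{C_j}=(x_i)_{i\in C_j}$, and $q^{C_j}(A)=\Pr(\max_{i\in C_j\setminus A}T_i<\min_{i\in A}T_i)$ for $A\subseteq C_j$. The function $q$ is $\mathcal{C}$-decomposable if there is $\tilde c\colon\prod_j\{0,\ldots,n_j\}\to\mathbb{R}$ with $q(A)=\tilde c(|A_1|,\ldots,|A_r|)\prod_j q^{C_j}(A_j)$ for all $A\subseteq C$. The tail probability signatures are $\overline{P}_k=\sum_{|A|=n-k}q(A)\phi(A)$ for $(C,\phi)$ and $\overline{P}_{j,k}=\sum_{A\subseteq C_j,|A|=n_j-k}q^{C_j}(A)\chi_j(A)$ for $(C_j,\chi_j)$. Let $\mathcal{T}_k=\{\mathbf{a}\in\mathbb{N}^r:0\le a_j\le n_j,\ \sum_j a_j=k\}$. The multilinear extension is $\widehat\psi(\mathbf{z})=\sum_{B\subseteq[r]}\psi(B)\prod_{j\in B}z_j\prod_{j\notin B}(1-z_j)$. *)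

theory Defs
  imports "HOL-Probability.Probability"
begin

text \<open>Components are the elements of a finite set S (the whole system is {..<n});
  subsets are identified with Boolean vectors, so structures are predicates on subsets.\<close>

definition semicoherent :: "'c set \<Rightarrow> ('c set \<Rightarrow> bool) \<Rightarrow> bool" where
  "semicoherent S f \<longleftrightarrow>
     (\<forall>A B. A \<subseteq> B \<and> B \<subseteq> S \<longrightarrow> f A \<longrightarrow> f B) \<and> \<not> f {} \<and> f S"

text \<open>Relative quality function of the components in S:
  q^S(A) = Pr(max_{i in S - A} T_i < min_{i in A} T_i)  (vacuous conditions give 1).\<close>

definition rel_quality :: "'a measure \<Rightarrow> ('c \<Rightarrow> 'a \<Rightarrow> real) \<Rightarrow> 'c set \<Rightarrow> 'c set \<Rightarrow> real" where
  "rel_quality M T S A =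
     measure M {\<omega> \<in> space M. \<forall>i \<in> S - A. \<forall>l \<in> A. T i \<omega> < T l \<omega>}"

definition tail_sig :: "'a measure \<Rightarrow> ('c \<Rightarrow> 'a \<Rightarrow> real) \<Rightarrow> 'c set \<Rightarrow> ('c set \<Rightarrow> bool) \<Rightarrow> nat \<Rightarrow> real" where
  "tail_sig M T S \<phi> k =
     (\<Sum>A \<in> {A. A \<subseteq> S \<and> card A = card S - k}. rel_quality M T S A * (if \<phi> A then 1 else 0))"

definition multilinear_ext :: "nat \<Rightarrow> (nat set \<Rightarrow> bool) \<Rightarrow> (nat \<Rightarrow> real) \<Rightarrow> real" where
  "multilinear_ext r \<psi> z =
     (\<Sum>B \<in> Pow {..<r}. (if \<psi> B then 1 else 0) * (\<Prod>j\<in>B. z j) * (\<Prod>j\<in>{..<r} - B. 1 - z j))"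

definition is_partition :: "nat \<Rightarrow> nat \<Rightarrow> (nat \<Rightarrow> nat set) \<Rightarrow> bool" where
  "is_partition n r Cb \<longleftrightarrow>
     (\<forall>j<r. Cb j \<noteq> {}) \<and>
     (\<forall>j<r. \<forall>j'<r. j \<noteq> j' \<longrightarrow> Cb j \<inter> Cb j' = {}) \<and>
     (\<Union>j<r. Cb j) = {..<n}"

text \<open>T_k: tuples (a_0,...,a_{r-1}) with 0 <= a_j <= n_j and sum k;
  represented as functions nat => nat that vanish outside {..<r}.\<close>

definition tuples :: "nat \<Rightarrow> (nat \<Rightarrow> nat set) \<Rightarrow> nat \<Rightarrow> (nat \<Rightarrow> nat) set" where
  "tuples r Cb k =
     {a. (\<forall>j<r. a j \<le> card (Cb j)) \<and> (\<forall>j\<ge>r. a j = 0) \<and> (\<Sum>j<r. a j) = k}"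

definition decomposable :: "'a measure \<Rightarrow> (nat \<Rightarrow> 'a \<Rightarrow> real) \<Rightarrow> nat \<Rightarrow> nat \<Rightarrow> (nat \<Rightarrow> nat set) \<Rightarrow> bool" where
  "decomposable M T n r Cb \<longleftrightarrow>
     (\<exists>c :: (nat \<Rightarrow> nat) \<Rightarrow> real. \<forall>A. A \<subseteq> {..<n} \<longrightarrow>
        rel_quality M T {..<n} A =
          c (\<lambda>j. if j < r then card (A \<inter> Cb j) else 0) *
          (\<Prod>j<r. rel_quality M T (Cb j) (A \<inter> Cb j)))"

end

theory Submission
  imports Defs
begin

lemma ml_J:
  assumes "J \<subseteq> {..<r}"
  shows "multilinear_ext r (\<lambda>B. J \<subseteq> B) z = (\<Prod>j\<in>J. z j)"
proof -
  define K where "K = {..<r} - J"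
  have fK: "finite K" "finite J" using assms finite_subset unfolding K_def by auto
  have "multilinear_ext r (\<lambda>B. J \<subseteq> B) z =
     (\<Sum>B \<in> {B\<in>Pow {..<r}. J \<subseteq> B}. (\<Prod>j\<in>B. z j) * (\<Prod>j\<in>{..<r} - B. 1 - z j))"
    unfolding multilinear_ext_def by (subst sum.inter_filter) (auto intro!: sum.cong)
  also have "{B\<in>Pow {..<r}. J \<subseteq> B} = (\<lambda>B'. J \<union> B') ` Pow K"
  proof (rule set_eqI, rule iffI)
    fix B assume "B \<in> {B\<in>Pow {..<r}. J \<subseteq> B}"
    then have "B = J \<union> (B - J)" "B - J \<in> Pow K" unfolding K_def by auto
    then show "B \<in> (\<lambda>B'. J \<union> B') ` Pow K" by blast
  next
    fix B assume "B \<in> (\<lambda>B'. J \<union> B') ` Pow K"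
    then show "B \<in> {B\<in>Pow {..<r}. J \<subseteq> B}" using assms unfolding K_def by auto
  qed
  also have "inj_on (\<lambda>B'. J \<union> B') (Pow K)"
    unfolding inj_on_def K_def by blast
  then have "(\<Sum>B \<in> (\<lambda>B'. J \<union> B') ` Pow K. (\<Prod>j\<in>B. z j) * (\<Prod>j\<in>{..<r} - B. 1 - z j))
      = (\<Sum>B' \<in> Pow K. (\<Prod>j\<in>J \<union> B'. z j) * (\<Prod>j\<in>{..<r} - (J \<union> B'). 1 - z j))"
    by (simp add: sum.reindex)
  also have "\<dots> = (\<Sum>B' \<in> Pow K. (\<Prod>j\<in>J. z j) * ((\<Prod>j\<in>B'. z j) * (\<Prod>j\<in>K - B'. 1 - z j)))"
  proof (rule sum.cong[OF refl])
    fix B' assume B': "B' \<in> Pow K"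
    then have "finite B'" using fK finite_subset by auto
    moreover have "J \<inter> B' = {}" using B' unfolding K_def by auto
    ultimately have "(\<Prod>j\<in>J \<union> B'. z j) = (\<Prod>j\<in>J. z j) * (\<Prod>j\<in>B'. z j)"
      using fK by (simp add: prod.union_disjoint)
    moreover have "{..<r} - (J \<union> B') = K - B'" unfolding K_def by auto
    ultimately show "(\<Prod>j\<in>J \<union> B'. z j) * (\<Prod>j\<in>{..<r} - (J \<union> B'). 1 - z j)
        = (\<Prod>j\<in>J. z j) * ((\<Prod>j\<in>B'. z j) * (\<Prod>j\<in>K - B'. 1 - z j))" by simp
  qed
  also have "\<dots> = (\<Prod>j\<in>J. z j) * (\<Prod>j\<in>K. z j + (1 - z j))"
    by (simp only: prod_add[OF fK(1)] sum_distrib_left)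
  also have "\<dots> = (\<Prod>j\<in>J. z j)" by simp
  finally show ?thesis .
qed


lemma tuples_finite: "finite (tuples r Cb k)"
proof -
  define N where "N = k"
  have "tuples r Cb k \<subseteq> (\<lambda>f j. if j < r then f j else 0) ` (Pi\<^sub>E {..<r} (\<lambda>_. {..N}))"
  proof
    fix a assume a: "a \<in> tuples r Cb k"
    have le: "a j \<le> N" if "j < r" for j
    proof -
      have "a j \<le> (\<Sum>j<r. a j)" using that by (intro member_le_sum) auto
      then show ?thesis using a unfolding tuples_def N_def by auto
    qed
    have "a = (\<lambda>j. if j < r then restrict a {..<r} j else 0)"
      using a unfolding tuples_def by (auto simp: fun_eq_iff)
    moreover have "restrict a {..<r} \<in> Pi\<^sub>E {..<r} (\<lambda>_. {..N})" using le by auto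
    ultimately show "a \<in> (\<lambda>f j. if j < r then f j else 0) ` (Pi\<^sub>E {..<r} (\<lambda>_. {..N}))"
      by blast
  qed
  moreover have "finite (Pi\<^sub>E {..<r} (\<lambda>_. {..N}))" by (intro finite_PiE) auto
  ultimately show ?thesis using finite_subset by blast
qed

theorem theorem15:
  fixes M :: "'a measure" and T :: "nat \<Rightarrow> 'a \<Rightarrow> real"
    and n r :: nat and Cb :: "nat \<Rightarrow> nat set" and \<gamma> :: "(nat \<Rightarrow> nat) \<Rightarrow> real"
  assumes "prob_space M"
    and "\<forall>i<n. T i \<in> borel_measurable M"
    and no_ties: "\<forall>i<n. \<forall>j<n. i \<noteq> j \<longrightarrow> (AE \<omega> in M. T i \<omega> \<noteq> T j \<omega>)"
    and "is_partition n r Cb"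
    and hyp: "\<forall>(chi :: nat \<Rightarrow> nat set \<Rightarrow> bool) (\<psi> :: nat set \<Rightarrow> bool).
       (\<forall>j<r. semicoherent (Cb j) (chi j)) \<longrightarrow> semicoherent {..<r} \<psi> \<longrightarrow>
       (\<forall>k\<le>n.
          tail_sig M T {..<n} (\<lambda>A. \<psi> {j \<in> {..<r}. chi j (A \<inter> Cb j)}) (n - k) =
          (\<Sum>a \<in> tuples r Cb k. \<gamma> a *
             multilinear_ext r \<psi> (\<lambda>j. tail_sig M T (Cb j) (chi j) (card (Cb j) - a j))))"
  shows "decomposable M T n r Cb"
proof -
  have q0: "rel_quality M T S {} = 1" for S :: "nat set"
    using prob_space.prob_space[OF assms(1)] unfolding rel_quality_def by simp
  have part: "\<forall>j<r. Cb j \<noteq> {}" "\<forall>j<r. \<forall>j'<r. j \<noteq> j' \<longrightarrow> Cb j \<inter> Cb j' = {}"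
      "(\<Union>j<r. Cb j) = {..<n}" using assms(4) unfolding is_partition_def by auto
  have Cbsub: "Cb j \<subseteq> {..<n}" if "j < r" for j using part(3) that by auto
  have finCb: "finite (Cb j)" if "j < r" for j using Cbsub[OF that] finite_subset by blast
  define prof where "prof A = (\<lambda>j. if j < r then card (A \<inter> Cb j) else 0)" for A :: "nat set"
  have key: "rel_quality M T {..<n} A0 = \<gamma> (prof A0) * (\<Prod>j<r. rel_quality M T (Cb j) (A0 \<inter> Cb j))"
    if A0: "A0 \<subseteq> {..<n}" "A0 \<noteq> {}" for A0
  proof -
    define J where "J = {j. j < r \<and> A0 \<inter> Cb j \<noteq> {}}"
    define chi where "chi j D = (A0 \<inter> Cb j \<subseteq> D \<and> D \<noteq> {})" for j and D :: "nat set"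
    define \<psi> where "\<psi> B = (J \<subseteq> B)" for B :: "nat set"
    define k where "k = card A0"
    have finA0: "finite A0" using A0 finite_subset by blast
    have kn: "k \<le> n" unfolding k_def using card_mono[OF _ A0(1)] by simp
    have Jr: "J \<subseteq> {..<r}" unfolding J_def by auto
    have Jne: "J \<noteq> {}"
    proof -
      obtain x where "x \<in> A0" using A0 by auto
      then obtain j where "j < r" "x \<in> Cb j" using A0 part(3) by auto
      then show ?thesis using \<open>x \<in> A0\<close> unfolding J_def by auto
    qed
    have sc_chi: "\<forall>j<r. semicoherent (Cb j) (chi j)"
      using part(1) unfolding semicoherent_def chi_def by auto
    have sc_psi: "semicoherent {..<r} \<psi>"
      using Jr Jne unfolding semicoherent_def \<psi>_def by auto
    have H: "tail_sig M T {..<n} (\<lambda>A. \<psi> {j \<in> {..<r}. chi j (A \<inter> Cb j)}) (n - k) =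
          (\<Sum>a \<in> tuples r Cb k. \<gamma> a *
             multilinear_ext r \<psi> (\<lambda>j. tail_sig M T (Cb j) (chi j) (card (Cb j) - a j)))"
      using hyp sc_chi sc_psi kn by blast
    have g: "\<psi> {j \<in> {..<r}. chi j (A \<inter> Cb j)} \<longleftrightarrow> A0 \<subseteq> A" for A
    proof
      assume "\<psi> {j \<in> {..<r}. chi j (A \<inter> Cb j)}"
      then have h: "\<forall>j\<in>J. A0 \<inter> Cb j \<subseteq> A" unfolding \<psi>_def chi_def by auto
      show "A0 \<subseteq> A"
      proof
        fix x assume "x \<in> A0"
        then obtain j where "j < r" "x \<in> Cb j" using A0 part(3) by auto
        then show "x \<in> A" using h \<open>x \<in> A0\<close> unfolding J_def by auto
      qed
    next
      assume "A0 \<subseteq> A"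
      then show "\<psi> {j \<in> {..<r}. chi j (A \<inter> Cb j)}" unfolding \<psi>_def chi_def J_def by auto
    qed
    have LHS: "tail_sig M T {..<n} (\<lambda>A. \<psi> {j \<in> {..<r}. chi j (A \<inter> Cb j)}) (n - k)
        = rel_quality M T {..<n} A0"
    proof -
      have "tail_sig M T {..<n} (\<lambda>A. \<psi> {j \<in> {..<r}. chi j (A \<inter> Cb j)}) (n - k)
          = (\<Sum>A \<in> {A. A \<subseteq> {..<n} \<and> card A = k}. if A = A0 then rel_quality M T {..<n} A else 0)"
        unfolding tail_sig_def g
      proof (rule sum.cong)
        show "{A. A \<subseteq> {..<n} \<and> card A = card {..<n} - (n - k)} = {A. A \<subseteq> {..<n} \<and> card A = k}"
          using kn by auto
      next
        fix A assume "A \<in> {A. A \<subseteq> {..<n} \<and> card A = k}"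
        then have "A \<subseteq> {..<n}" "card A = k" by auto
        then have "finite A" using finite_subset by blast
        then have "A0 \<subseteq> A \<longleftrightarrow> A = A0" using card_subset_eq[of A A0] \<open>card A = k\<close> k_def by auto
        then show "rel_quality M T {..<n} A * (if A0 \<subseteq> A then 1 else 0) =
            (if A = A0 then rel_quality M T {..<n} A else 0)" by auto
      qed
      also have "\<dots> = rel_quality M T {..<n} A0"
      proof -
        have "finite {A. A \<subseteq> {..<n} \<and> card A = k}"
          by (rule finite_subset[of _ "Pow {..<n}"]) auto
        then show ?thesis by (subst sum.delta) (auto simp: A0 k_def)
      qed
      finally show ?thesis .
    qed
    define z where "z a j = tail_sig M T (Cb j) (chi j) (card (Cb j) - a j)" for a :: "nat \<Rightarrow> nat" and j
    have z0: "z a j = 0" if "j < r" "a j < card (A0 \<inter> Cb j)" for a j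
    proof -
      have "\<And>D. D \<subseteq> Cb j \<Longrightarrow> card D = card (Cb j) - (card (Cb j) - a j) \<Longrightarrow> \<not> chi j D"
      proof
        fix D assume D: "D \<subseteq> Cb j" "card D = card (Cb j) - (card (Cb j) - a j)" "chi j D"
        have "finite D" using D finCb[OF \<open>j<r\<close>] finite_subset by blast
        then have "card (A0 \<inter> Cb j) \<le> card D" using D(3) card_mono unfolding chi_def by blast
        then show False using D(2) that by linarith
      qed
      then show ?thesis unfolding z_def tail_sig_def by (auto intro!: sum.neutral)
    qed
    have zA0: "z (prof A0) j = rel_quality M T (Cb j) (A0 \<inter> Cb j)" if "j \<in> J" for j
    proof -
      have jr: "j < r" and ne: "A0 \<inter> Cb j \<noteq> {}" using that unfolding J_def by auto
      have le: "card (A0 \<inter> Cb j) \<le> card (Cb j)" using card_mono[OF finCb[OF jr]] by auto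
      have "z (prof A0) j = (\<Sum>D \<in> {D. D \<subseteq> Cb j \<and> card D = card (A0 \<inter> Cb j)}.
             if D = A0 \<inter> Cb j then rel_quality M T (Cb j) D else 0)"
        unfolding z_def tail_sig_def prof_def
      proof (rule sum.cong)
        show "{A. A \<subseteq> Cb j \<and> card A = card (Cb j) - (card (Cb j) - (if j < r then card (A0 \<inter> Cb j) else 0))}
            = {D. D \<subseteq> Cb j \<and> card D = card (A0 \<inter> Cb j)}" using jr le by auto
      next
        fix D assume "D \<in> {D. D \<subseteq> Cb j \<and> card D = card (A0 \<inter> Cb j)}"
        then have D: "D \<subseteq> Cb j" "card D = card (A0 \<inter> Cb j)" by auto
        then have "finite D" using finCb[OF jr] finite_subset by blast
        then have "chi j D \<longleftrightarrow> D = A0 \<inter> Cb j"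
          using card_subset_eq[of D "A0 \<inter> Cb j"] D ne unfolding chi_def by auto
        then show "rel_quality M T (Cb j) D * (if chi j D then 1 else 0) =
             (if D = A0 \<inter> Cb j then rel_quality M T (Cb j) D else 0)" by auto
      qed
      also have "\<dots> = rel_quality M T (Cb j) (A0 \<inter> Cb j)"
      proof -
        have "finite {D. D \<subseteq> Cb j \<and> card D = card (A0 \<inter> Cb j)}"
          by (rule finite_subset[of _ "Pow (Cb j)"]) (auto simp: finCb[OF jr])
        then show ?thesis by (subst sum.delta) auto
      qed
      finally show ?thesis .
    qed
    have cardA0: "k = (\<Sum>j<r. card (A0 \<inter> Cb j))"
    proof -
      have "A0 = (\<Union>j<r. A0 \<inter> Cb j)" using A0 part(3) by auto
      then have "card A0 = card (\<Union>j<r. A0 \<inter> Cb j)" by simp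
      also have "\<dots> = (\<Sum>j<r. card (A0 \<inter> Cb j))"
        using finCb part(2) by (intro card_UN_disjoint) auto
      finally show ?thesis unfolding k_def .
    qed
    have profT: "prof A0 \<in> tuples r Cb k"
      unfolding tuples_def prof_def using cardA0 card_mono[OF finCb] by auto
    have other: "(\<Prod>j\<in>J. z a j) = 0" if a: "a \<in> tuples r Cb k" "a \<noteq> prof A0" for a
    proof (rule ccontr)
      assume nz: "(\<Prod>j\<in>J. z a j) \<noteq> 0"
      have ge: "card (A0 \<inter> Cb j) \<le> a j" if "j < r" for j
      proof (cases "j \<in> J")
        case True
        then have "z a j \<noteq> 0" using nz Jr finite_subset[OF Jr] by auto
        then show ?thesis using z0[of j a] \<open>j < r\<close> by (meson not_le)
      next
        case False then show ?thesis using that unfolding J_def by auto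
      qed
      have sumeq: "(\<Sum>j<r. a j) = (\<Sum>j<r. card (A0 \<inter> Cb j))"
        using a(1) cardA0 unfolding tuples_def by auto
      have "\<forall>j\<in>{..<r}. a j = card (A0 \<inter> Cb j)"
        using sum_mono_inv[OF sumeq[symmetric]] ge by auto
      then have "a = prof A0" using a(1) unfolding tuples_def prof_def by (auto simp: fun_eq_iff)
      then show False using a(2) by simp
    qed
    have RHS: "(\<Sum>a \<in> tuples r Cb k. \<gamma> a * multilinear_ext r \<psi> (z a))
        = \<gamma> (prof A0) * (\<Prod>j\<in>J. rel_quality M T (Cb j) (A0 \<inter> Cb j))"
    proof -
      have "(\<Sum>a \<in> tuples r Cb k. \<gamma> a * multilinear_ext r \<psi> (z a))
          = (\<Sum>a \<in> tuples r Cb k. if a = prof A0 then \<gamma> a * (\<Prod>j\<in>J. z a j) else 0)"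
        unfolding \<psi>_def ml_J[OF Jr] using other by (intro sum.cong) auto
      also have "\<dots> = \<gamma> (prof A0) * (\<Prod>j\<in>J. z (prof A0) j)"
        using tuples_finite profT by (subst sum.delta) auto
      also have "\<dots> = \<gamma> (prof A0) * (\<Prod>j\<in>J. rel_quality M T (Cb j) (A0 \<inter> Cb j))"
        using zA0 by simp
      finally show ?thesis .
    qed
    have prodJ: "(\<Prod>j\<in>J. rel_quality M T (Cb j) (A0 \<inter> Cb j)) = (\<Prod>j<r. rel_quality M T (Cb j) (A0 \<inter> Cb j))"
      by (rule prod.mono_neutral_left) (auto simp: Jr J_def q0)
    show ?thesis using H LHS RHS prodJ unfolding z_def by simp
  qed
  define c where "c a = (if a = (\<lambda>j. 0) then 1 else \<gamma> a)" for a :: "nat \<Rightarrow> nat"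
  show ?thesis unfolding decomposable_def
  proof (intro exI allI impI)
    fix A assume A: "A \<subseteq> {..<n}"
    show "rel_quality M T {..<n} A =
          c (\<lambda>j. if j < r then card (A \<inter> Cb j) else 0) *
          (\<Prod>j<r. rel_quality M T (Cb j) (A \<inter> Cb j))"
    proof (cases "A = {}")
      case True
      have "(\<lambda>j. if j < r then card (A \<inter> Cb j) else 0) = (\<lambda>j. 0)" using True by auto
      then show ?thesis using True by (simp add: q0 c_def)
    next
      case False
      then obtain x where "x \<in> A" by auto
      then obtain j where j: "j < r" "x \<in> Cb j" using A part(3) by auto
      then have "card (A \<inter> Cb j) \<noteq> 0" using finCb[OF j(1)] \<open>x \<in> A\<close> by auto
      then have "prof A \<noteq> (\<lambda>j. 0)" using j unfolding prof_def by (auto simp: fun_eq_iff)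
      then show ?thesis using key[OF A False] unfolding c_def prof_def by simp
    qed
  qed
qed

end
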